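(* For every $n\ge2$, $$E\big[U^{(n)}(U^{(n)}-\tau^{(n)})\big]=\frac{2n}{n-1}\Big(H_{n,1}+H_{n,2}-1-\frac{H_{n,1}^2}{n}\Big).$$
   Context: Fix $n\ge 2$. A Yule tree with speciation rate 1 on $n$ tips: start with a single lineage; each lineage independently splits into two at rate 1; the process is stopped just before the $n$-th speciation event, so the tree has $n$ tips and $n-1$ speciation (internal) nodes, numbered $1,\dots,n-1$ chronologically from the root. For $i=1,\dots,n$ let $T_i$ be the length of the time interval during which there are exactly $i$ lineages; the $T_i$ are independent, $T_i\sim\mathrm{Exp}(i)$ (rate $i$), the $k$-th speciation occurs at time $T_1+\dots+T_k$, and at each speciation the splitting lineage is uniformly chosen among current lineages, independently of the $T_i$. The tree height is $U^{(n)}=T_1+\dots+T_n$. Choose an unordered pair of distinct tips uniformly at random and let $\kappa_n\in\{1,\dots,n-1\}$ be the index of the speciation event at which their lineages split; the coalescent time of the pair is $\tau^{(n)}=T_{\kappa_n+1}+\dots+T_n$. $H_{n,r}=\sum_{i=1}^n i^{-r}$. *)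

theory Defs
  imports "HOL-Probability.Probability"
begin

definition Hgen :: "nat \<Rightarrow> nat \<Rightarrow> real" where
  "Hgen n r = (\<Sum>i=1..n. 1 / (real i) ^ r)"

text \<open>Topology of the Yule tree on n tips.  Lineages are labelled 0,1,2,...
  Before the j-th speciation event (j = 1..n-1) there are j lineages 0..j-1;
  the lineage cs!(j-1) (a number < j) splits, keeping its label and
  producing the new lineage j.  A topology is the list cs of these choices;
  the splitting lineage is uniform and independent at each event, so cs is
  uniform over all valid choice lists.\<close>
definition yule_choices :: "nat \<Rightarrow> nat list set" where
  "yule_choices n = {cs. length cs = n - 1 \<and> (\<forall>j < n - 1. cs ! j \<le> j)}"

definition yule_topology :: "nat \<Rightarrow> nat list pmf" where
  "yule_topology n = pmf_of_set (yule_choices n)"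

text \<open>split_event cs m a b: index of the speciation event at which lineages
  a and b (distinct, both present after m events, i.e. a, b \<le> m) split,
  obtained by tracing both lineages back in time.\<close>
fun split_event :: "nat list \<Rightarrow> nat \<Rightarrow> nat \<Rightarrow> nat \<Rightarrow> nat" where
  "split_event cs 0 a b = 0"
| "split_event cs (Suc m) a b =
     (let c = cs ! m;
          a' = (if a = Suc m then c else a);
          b' = (if b = Suc m then c else b)
      in if a' = b' then Suc m else split_event cs m a' b')"

definition tip_pairs :: "nat \<Rightarrow> (nat \<times> nat) set" where
  "tip_pairs n = {(a, b). a < b \<and> b < n}"

text \<open>Full probability space: (topology, pair) together with the independent
  interval lengths T_i ~ Exp(i), i = 1..n, independent of the topology.\<close>
definition yule_space :: "nat \<Rightarrow> ((nat list \<times> (nat \<times> nat)) \<times> (nat \<Rightarrow> real)) measure" where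
  "yule_space n =
     measure_pmf (pair_pmf (yule_topology n) (pmf_of_set (tip_pairs n)))
     \<Otimes>\<^sub>M (\<Pi>\<^sub>M i\<in>{1..n}. density lborel (exponential_density (real i)))"

definition kappa :: "nat \<Rightarrow> nat list \<times> (nat \<times> nat) \<Rightarrow> nat" where
  "kappa n \<omega> = split_event (fst \<omega>) (n - 1) (fst (snd \<omega>)) (snd (snd \<omega>))"

definition tree_height :: "nat \<Rightarrow> (nat \<Rightarrow> real) \<Rightarrow> real" where
  "tree_height n T = (\<Sum>i=1..n. T i)"

definition coal_time :: "nat \<Rightarrow> (nat list \<times> (nat \<times> nat)) \<times> (nat \<Rightarrow> real) \<Rightarrow> real" where
  "coal_time n x = (\<Sum>i\<in>{kappa n (fst x) + 1..n}. snd x i)"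

end

theory Submission
  imports Defs
begin

definition chs :: "nat \<Rightarrow> nat list set" where
  "chs m = {cs. length cs = m \<and> (\<forall>j<m. cs ! j \<le> j)}"

lemma chs_Suc: "chs (Suc m) = (\<lambda>(cs,c). cs @ [c]) ` (chs m \<times> {..m})"
proof (rule set_eqI, rule iffI)
  fix xs assume "xs \<in> chs (Suc m)"
  hence l: "length xs = Suc m" and c: "\<forall>j<Suc m. xs ! j \<le> j" by (auto simp: chs_def)
  then obtain ys y where xs: "xs = ys @ [y]"
    by (cases xs rule: rev_exhaust) auto
  have ly: "length ys = m" using l xs by simp
  have "ys \<in> chs m" unfolding chs_def
  proof (intro CollectI conjI allI impI)
    fix j assume "j < m" thus "ys ! j \<le> j" using c[rule_format, of j] ly xs by (simp add: nth_append)
  qed (fact ly)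
  moreover have "xs ! m = y" using xs ly by (metis nth_append_length)
  hence "y \<le> m" using c by auto
  ultimately show "xs \<in> (\<lambda>(cs,c). cs @ [c]) ` (chs m \<times> {..m})" using xs by force
next
  fix xs assume "xs \<in> (\<lambda>(cs,c). cs @ [c]) ` (chs m \<times> {..m})"
  then obtain ys y where "xs = ys @ [y]" "ys \<in> chs m" "y \<le> m" by auto
  then show "xs \<in> chs (Suc m)"
    by (auto simp: chs_def nth_append less_Suc_eq)
qed
lemma chs_0: "chs 0 = {[]}" by (auto simp: chs_def)

lemma chs_inj: "inj_on (\<lambda>(cs,c). cs @ [c]) (chs m \<times> {..m})"
  by (auto simp: inj_on_def)

lemma chs_finite: "finite (chs m)"
  by (induction m) (auto simp: chs_0 chs_Suc)

lemma chs_card: "card (chs m) = fact m"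
proof (induction m)
  case 0 then show ?case by (simp add: chs_0)
next
  case (Suc m)
  have "card (chs (Suc m)) = card (chs m \<times> {..m})"
    unfolding chs_Suc by (rule card_image[OF chs_inj])
  also have "\<dots> = fact m * Suc m" using Suc by (simp add: card_cartesian_product)
  finally show ?case by (simp add: algebra_simps)
qed

lemma se_append: "m \<le> length cs \<Longrightarrow> split_event (cs @ ys) m a b = split_event cs m a b"
  by (induction m arbitrary: a b) (auto simp: nth_append Let_def)

lemma se_le: "split_event cs m a b \<le> m"
  by (induction m arbitrary: a b) (auto simp: Let_def le_SucI)

lemma se_sym: "split_event cs m a b = split_event cs m b a"
  by (induction m arbitrary: a b) (auto simp: Let_def)

definition Ord :: "nat \<Rightarrow> nat list \<Rightarrow> nat \<Rightarrow> nat" where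
  "Ord m cs j = (\<Sum>a\<le>m. \<Sum>b\<le>m. if a \<noteq> b \<and> j \<le> split_event cs m a b then 1 else 0)"

lemma sum_split_pt:
  fixes x :: nat and m c :: nat
  assumes "c \<le> m"
  shows "(\<Sum>b\<le>m. if b = c then x else f b) = x + (\<Sum>b\<le>m. if b = c then 0 else f b)"
proof -
  have "(\<Sum>b\<le>m. if b = c then x else f b) = (\<Sum>b\<le>m. (if b = c then x else 0) + (if b = c then 0 else f b))"
    by (intro sum.cong) auto
  also have "\<dots> = x + (\<Sum>b\<le>m. if b = c then 0 else f b)"
    using assms by (simp add: sum.distrib)
  finally show ?thesis .
qed

lemma Ord_snoc:
  assumes "length cs = m" "c \<le> m"
  shows "Ord (Suc m) (cs @ [c]) j = Ord m cs j + 2 * (if j \<le> Suc m then 1 else 0)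
     + (\<Sum>b\<le>m. if b \<noteq> c \<and> j \<le> split_event cs m c b then 1 else 0)
     + (\<Sum>a\<le>m. if a \<noteq> c \<and> j \<le> split_event cs m a c then 1 else 0)"
proof -
  have nth: "(cs @ [c]) ! m = c" using assms by (metis nth_append_length)
  have seA: "\<And>a b. split_event (cs @ [c]) m a b = split_event cs m a b" using se_append assms by simp
  have old: "\<And>a b. a \<le> m \<Longrightarrow> b \<le> m \<Longrightarrow> (if a \<noteq> b \<and> j \<le> split_event (cs @ [c]) (Suc m) a b then 1 else 0)
      = (if a \<noteq> b \<and> j \<le> split_event cs m a b then (1::nat) else 0)"
    using assms by (auto simp: Let_def nth seA)
  have row: "(\<Sum>b\<le>m. if Suc m \<noteq> b \<and> j \<le> split_event (cs @ [c]) (Suc m) (Suc m) b then 1 else 0)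
      = (if j \<le> Suc m then 1 else 0) + (\<Sum>b\<le>m. if b \<noteq> c \<and> j \<le> split_event cs m c b then (1::nat) else 0)"
  proof -
    have "(\<Sum>b\<le>m. if Suc m \<noteq> b \<and> j \<le> split_event (cs @ [c]) (Suc m) (Suc m) b then 1 else 0)
       = (\<Sum>b\<le>m. if b = c then (if j \<le> Suc m then 1 else 0) else (if j \<le> split_event cs m c b then (1::nat) else 0))"
      using assms by (intro sum.cong) (auto simp: Let_def nth seA)
    also have "\<dots> = (if j \<le> Suc m then 1 else 0) + (\<Sum>b\<le>m. if b = c then 0 else (if j \<le> split_event cs m c b then (1::nat) else 0))"
      by (rule sum_split_pt[OF assms(2)])
    also have "(\<Sum>b\<le>m. if b = c then 0 else (if j \<le> split_event cs m c b then (1::nat) else 0)) = (\<Sum>b\<le>m. if b \<noteq> c \<and> j \<le> split_event cs m c b then (1::nat) else 0)"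
      by (intro sum.cong) auto
    finally show ?thesis .
  qed
  have col: "(\<Sum>a\<le>m. if a \<noteq> Suc m \<and> j \<le> split_event (cs @ [c]) (Suc m) a (Suc m) then 1 else 0)
      = (if j \<le> Suc m then 1 else 0) + (\<Sum>a\<le>m. if a \<noteq> c \<and> j \<le> split_event cs m a c then (1::nat) else 0)"
  proof -
    have "(\<Sum>a\<le>m. if a \<noteq> Suc m \<and> j \<le> split_event (cs @ [c]) (Suc m) a (Suc m) then 1 else 0)
       = (\<Sum>a\<le>m. if a = c then (if j \<le> Suc m then 1 else 0) else (if j \<le> split_event cs m a c then (1::nat) else 0))"
      using assms by (intro sum.cong) (auto simp: Let_def nth seA)
    also have "\<dots> = (if j \<le> Suc m then 1 else 0) + (\<Sum>a\<le>m. if a = c then 0 else (if j \<le> split_event cs m a c then (1::nat) else 0))"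
      by (rule sum_split_pt[OF assms(2)])
    also have "(\<Sum>a\<le>m. if a = c then 0 else (if j \<le> split_event cs m a c then (1::nat) else 0)) = (\<Sum>a\<le>m. if a \<noteq> c \<and> j \<le> split_event cs m a c then (1::nat) else 0)"
      by (intro sum.cong) auto
    finally show ?thesis .
  qed
  have "Ord (Suc m) (cs @ [c]) j = (\<Sum>a\<le>m. \<Sum>b\<le>m. if a \<noteq> b \<and> j \<le> split_event (cs @ [c]) (Suc m) a b then 1 else 0)
     + (\<Sum>a\<le>m. if a \<noteq> Suc m \<and> j \<le> split_event (cs @ [c]) (Suc m) a (Suc m) then 1 else 0)
     + (\<Sum>b\<le>m. if Suc m \<noteq> b \<and> j \<le> split_event (cs @ [c]) (Suc m) (Suc m) b then 1 else 0)"
    unfolding Ord_def by (simp add: sum.distrib)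
  also have "(\<Sum>a\<le>m. \<Sum>b\<le>m. if a \<noteq> b \<and> j \<le> split_event (cs @ [c]) (Suc m) a b then 1 else 0) = Ord m cs j"
    unfolding Ord_def by (intro sum.cong refl) (simp add: seA Let_def nth)
  finally show ?thesis using row col by simp
qed


definition Tot :: "nat \<Rightarrow> nat \<Rightarrow> nat" where
  "Tot m j = (\<Sum>cs\<in>chs m. Ord m cs j)"

lemma Ord_row: "(\<Sum>c\<le>m. \<Sum>b\<le>m. if b \<noteq> c \<and> j \<le> split_event cs m c b then 1 else 0) = Ord m cs j"
  unfolding Ord_def by (intro sum.cong refl) auto

lemma Ord_col: "(\<Sum>c\<le>m. \<Sum>a\<le>m. if a \<noteq> c \<and> j \<le> split_event cs m a c then 1 else 0) = Ord m cs j"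
  unfolding Ord_def by (rule sum.swap)

lemma Tot_Suc: "Tot (Suc m) j = (m + 3) * Tot m j + 2 * fact (Suc m) * (if j \<le> Suc m then 1 else 0)"
proof -
  have "Tot (Suc m) j = (\<Sum>(cs,c)\<in>chs m \<times> {..m}. Ord (Suc m) (cs @ [c]) j)"
    unfolding Tot_def chs_Suc by (subst sum.reindex[OF chs_inj]) (simp add: comp_def case_prod_unfold)
  also have "\<dots> = (\<Sum>cs\<in>chs m. \<Sum>c\<le>m. Ord (Suc m) (cs @ [c]) j)"
    by (simp add: sum.cartesian_product)
  also have "\<dots> = (\<Sum>cs\<in>chs m. (m + 3) * Ord m cs j + 2 * Suc m * (if j \<le> Suc m then 1 else 0))"
  proof (rule sum.cong[OF refl])
    fix cs assume "cs \<in> chs m"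
    hence l: "length cs = m" by (simp add: chs_def)
    have "(\<Sum>c\<le>m. Ord (Suc m) (cs @ [c]) j) = (\<Sum>c\<le>m. Ord m cs j + 2 * (if j \<le> Suc m then 1 else 0)
     + (\<Sum>b\<le>m. if b \<noteq> c \<and> j \<le> split_event cs m c b then 1 else 0)
     + (\<Sum>a\<le>m. if a \<noteq> c \<and> j \<le> split_event cs m a c then 1 else 0))"
      by (intro sum.cong refl Ord_snoc l) simp
    also have "\<dots> = Suc m * Ord m cs j + Suc m * (2 * (if j \<le> Suc m then 1 else 0)) + Ord m cs j + Ord m cs j"
      by (simp only: sum.distrib Ord_row Ord_col) simp
    also have "\<dots> = (m + 3) * Ord m cs j + 2 * Suc m * (if j \<le> Suc m then 1 else 0)"
      by (simp add: algebra_simps)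
    finally show "(\<Sum>c\<le>m. Ord (Suc m) (cs @ [c]) j) = (m + 3) * Ord m cs j + 2 * Suc m * (if j \<le> Suc m then 1 else 0)" .
  qed
  also have "\<dots> = (m + 3) * Tot m j + card (chs m) * (2 * Suc m * (if j \<le> Suc m then 1 else 0))"
    by (simp add: sum.distrib Tot_def sum_distrib_left)
  also have "\<dots> = (m + 3) * Tot m j + 2 * fact (Suc m) * (if j \<le> Suc m then 1 else 0)"
    by (simp add: chs_card algebra_simps)
  finally show ?thesis .
qed

lemma Tot_big: assumes "m < j" shows "Tot m j = 0"
proof -
  have "\<And>cs a b. \<not> j \<le> split_event cs m a b" using se_le assms by (meson le_trans not_le)
  then show ?thesis unfolding Tot_def Ord_def by simp
qed

lemma Tot_formula: "1 \<le> j \<Longrightarrow> j \<le> Suc m \<Longrightarrow> (j + 1) * Tot m j = 2 * fact (Suc m) * (Suc m - j)"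
proof (induction m arbitrary: j)
  case 0
  then have "j = 1" by simp
  then show ?case by (simp add: Tot_def chs_0 Ord_def)
next
  case (Suc m)
  show ?case
  proof (cases "j = Suc (Suc m)")
    case True
    then show ?thesis using Tot_big[of "Suc m" j] by simp
  next
    case False
    with Suc.prems have jl: "j \<le> Suc m" by simp
    obtain d where d: "Suc m = j + d" using jl le_Suc_ex by blast
    have IH: "(j + 1) * Tot m j = 2 * fact (Suc m) * d" using Suc.IH[OF Suc.prems(1) jl] d by simp
    have "(j + 1) * Tot (Suc m) j = (m + 3) * ((j + 1) * Tot m j) + (j + 1) * (2 * fact (Suc m))"
      using jl by (simp add: Tot_Suc algebra_simps)
    also have "\<dots> = 2 * fact (Suc m) * ((m + 3) * d + (j + 1))"
      using IH by (simp add: algebra_simps)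
    also have "(m + 3) * d + (j + 1) = (Suc (Suc m)) * (Suc (Suc m) - j)"
    proof -
      have e: "Suc (Suc m) - j = Suc d" using d by simp
      have "Suc (Suc m) * Suc d = m*d + m + 2*d + 2" by (simp add: algebra_simps)
      moreover have "(m+3)*d + (j+1) = m*d + 3*d + j + 1" by (simp add: algebra_simps)
      ultimately show ?thesis unfolding e using d by linarith
    qed
    finally have X: "(j + 1) * Tot (Suc m) j = 2 * fact (Suc m) * (Suc (Suc m) * (Suc (Suc m) - j))" .
    have "\<And>e. 2 * fact (Suc (Suc m)) * e = 2 * fact (Suc m) * (Suc (Suc m) * (e::nat))"
      by (simp add: algebra_simps)
    then show ?thesis using X by metis
  qed
qed


lemma tip_pairs_Suc: "tip_pairs (Suc n) = tip_pairs n \<union> (\<lambda>a. (a, n)) ` {..<n}"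
  by (auto simp: tip_pairs_def less_Suc_eq)

lemma tip_pairs_finite: "finite (tip_pairs n)"
  by (induction n) (auto simp: tip_pairs_Suc, simp add: tip_pairs_def)

lemma tip_pairs_card: "2 * card (tip_pairs n) = n * (n - 1)"
proof (induction n)
  case 0 then show ?case by (simp add: tip_pairs_def)
next
  case (Suc n)
  have d: "tip_pairs n \<inter> (\<lambda>a. (a, n)) ` {..<n} = {}" by (auto simp: tip_pairs_def)
  have "card (tip_pairs (Suc n)) = card (tip_pairs n) + card ((\<lambda>a. (a, n)) ` {..<n})"
    unfolding tip_pairs_Suc by (rule card_Un_disjoint[OF tip_pairs_finite _ d]) simp
  also have "card ((\<lambda>a. (a, n)) ` {..<n}) = n" by (subst card_image) (auto simp: inj_on_def)
  finally show ?case using Suc by (cases n) (simp_all add: algebra_simps)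
qed

lemma Ord_pairs: "2 * (\<Sum>p\<in>tip_pairs (Suc m). if j \<le> split_event cs m (fst p) (snd p) then 1 else 0) = Ord m cs j"
proof -
  define h where "h a b = (if a < b \<and> j \<le> split_event cs m a b then 1 else (0::nat))" for a b
  have "Ord m cs j = (\<Sum>a\<le>m. \<Sum>b\<le>m. h a b + h b a)"
    unfolding Ord_def h_def by (intro sum.cong refl) (auto simp: se_sym[of cs m])
  also have "\<dots> = (\<Sum>a\<le>m. \<Sum>b\<le>m. h a b) + (\<Sum>a\<le>m. \<Sum>b\<le>m. h b a)"
    by (simp add: sum.distrib)
  also have "(\<Sum>a\<le>m. \<Sum>b\<le>m. h b a) = (\<Sum>a\<le>m. \<Sum>b\<le>m. h a b)" by (rule sum.swap)
  also have "(\<Sum>a\<le>m. \<Sum>b\<le>m. h a b) = (\<Sum>p\<in>{..m} \<times> {..m}. h (fst p) (snd p))"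
    by (simp add: sum.cartesian_product case_prod_unfold)
  also have "\<dots> = (\<Sum>p\<in>tip_pairs (Suc m). h (fst p) (snd p))"
    by (rule sum.mono_neutral_right) (auto simp: tip_pairs_def h_def)
  also have "\<dots> = (\<Sum>p\<in>tip_pairs (Suc m). if j \<le> split_event cs m (fst p) (snd p) then 1 else 0)"
    by (intro sum.cong refl) (auto simp: tip_pairs_def h_def)
  finally show ?thesis by simp
qed

definition Mi :: "nat \<Rightarrow> real measure" where
  "Mi i = density lborel (exponential_density (real i))"

lemma Mi_prob: "0 < i \<Longrightarrow> prob_space (Mi i)"
  unfolding Mi_def by (rule prob_space_exponential_density) simp

lemma Mi_sf: "sigma_finite_measure (Mi i)"
proof (cases "i = 0")
  case True
  have "emeasure (Mi i) (space (Mi i)) = (\<integral>\<^sup>+x. ennreal (exponential_density 0 x) \<partial>lborel)"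
    unfolding Mi_def True by (simp add: emeasure_density)
  also have "\<dots> = (\<integral>\<^sup>+x. 0 \<partial>lborel)"
  proof -
    have "\<And>x. exponential_density 0 x = 0" by (simp add: exponential_density_def)
    then show ?thesis by simp
  qed
  finally have "emeasure (Mi i) (space (Mi i)) \<noteq> \<infinity>" by simp
  then interpret finite_measure "Mi i" by (rule finite_measureI)
  show ?thesis by unfold_locales
next
  case False
  then interpret prob_space "Mi i" using Mi_prob by simp
  show ?thesis by unfold_locales
qed

lemma Mi_psf: "product_sigma_finite Mi"
  unfolding product_sigma_finite_def using Mi_sf by blast

lemma Mi_mom:
  assumes "0 < i"
  shows "has_bochner_integral (Mi i) (\<lambda>x. x ^ k) (fact k / real i ^ k)"
proof -
  interpret prob_space "Mi i" using Mi_prob assms by simp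
  have l: "0 < real i" using assms by simp
  have D: "distributed (Mi i) lborel (\<lambda>x. x) (exponential_density (real i))"
    unfolding distributed_def Mi_def
    by (auto simp: distr_id2)
  show ?thesis using has_bochner_integral_erlang_ith_moment[OF l D, of k] by simp
qed


lemma N_mom:
  assumes i: "i \<in> {1..n}" and j: "j \<in> {1..n}"
  shows "has_bochner_integral (PiM {1..n} Mi) (\<lambda>T. T i * T j) ((if i = j then 2 else 1) / (real i * real j))"
proof -
  interpret product_sigma_finite Mi by (rule Mi_psf)
  define p where "p k = (if k = i then 1 else 0) + (if k = j then 1 else (0::nat))" for k
  have eq: "(\<Prod>k\<in>{1..n}. T k ^ p k) = T i * T j" for T :: "nat \<Rightarrow> real"
  proof -
    have "(\<Prod>k\<in>{1..n}. T k ^ p k) = (\<Prod>k\<in>{1..n}. (if k = i then T k else 1) * (if k = j then T k else 1))"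
      by (intro prod.cong refl) (simp add: p_def power_add)
    also have "\<dots> = T i * T j" using i j by (simp add: prod.distrib)
    finally show ?thesis .
  qed
  have hb: "k \<in> {1..n} \<Longrightarrow> has_bochner_integral (Mi k) (\<lambda>x. x ^ p k) (fact (p k) / real k ^ p k)" for k
    by (rule Mi_mom) simp
  have int: "integrable (PiM {1..n} Mi) (\<lambda>T. \<Prod>k\<in>{1..n}. T k ^ p k)"
    by (rule product_integrable_prod) (use hb in \<open>auto simp: has_bochner_integral_iff\<close>)
  have "(\<integral>T. (\<Prod>k\<in>{1..n}. T k ^ p k) \<partial>PiM {1..n} Mi) = (\<Prod>k\<in>{1..n}. integral\<^sup>L (Mi k) (\<lambda>x. x ^ p k))"
    by (rule product_integral_prod) (use hb in \<open>auto simp: has_bochner_integral_iff\<close>)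
  also have "\<dots> = (\<Prod>k\<in>{1..n}. (if k = i \<and> k = j then 2 else 1) * ((if k = i then 1 / real k else 1) * (if k = j then 1 / real k else 1)))"
  proof (intro prod.cong refl)
    fix k assume k: "k \<in> {1..n}"
    have "integral\<^sup>L (Mi k) (\<lambda>x. x ^ p k) = fact (p k) / real k ^ p k"
      using hb[OF k] by (simp add: has_bochner_integral_iff)
    also have "\<dots> = (if k = i \<and> k = j then 2 else 1) * ((if k = i then 1 / real k else 1) * (if k = j then 1 / real k else 1))"
      by (auto simp: p_def power2_eq_square)
    finally show "integral\<^sup>L (Mi k) (\<lambda>x. x ^ p k) = \<dots>" .
  qed
  also have "\<dots> = (if i = j then 2 else 1) / (real i * real j)"
  proof (cases "i = j")
    case True
    then show ?thesis using i by (simp add: prod.distrib)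
  next
    case False
    then have "(\<Prod>k\<in>{1..n}. (if k = i \<and> k = j then 2 else 1::real)) = 1" by (intro prod.neutral) auto
    then show ?thesis using i j False by (simp add: prod.distrib)
  qed
  finally have X: "(\<integral>T. (\<Prod>k\<in>{1..n}. T k ^ p k) \<partial>PiM {1..n} Mi) = (if i = j then 2 else 1) / (real i * real j)" .
  have eqf: "(\<lambda>T::nat\<Rightarrow>real. \<Prod>k\<in>{1..n}. T k ^ p k) = (\<lambda>T. T i * T j)" using eq by auto
  show ?thesis using int X unfolding eqf by (simp add: has_bochner_integral_iff)
qed

lemma prod_int:
  fixes P :: "'a pmf" and N :: "'b measure" and f :: "'a \<Rightarrow> real" and g :: "'b \<Rightarrow> real"
  assumes fin: "finite (set_pmf P)" and N: "prob_space N" and g: "integrable N g"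
  shows "integrable (measure_pmf P \<Otimes>\<^sub>M N) (\<lambda>x. f (fst x) * g (snd x))"
    and "(\<integral>x. f (fst x) * g (snd x) \<partial>(measure_pmf P \<Otimes>\<^sub>M N)) = (\<integral>\<omega>. f \<omega> \<partial>measure_pmf P) * integral\<^sup>L N g"
proof -
  interpret N: prob_space N by (rule N)
  interpret pair_sigma_finite "measure_pmf P" N
    by (intro pair_sigma_finite.intro) unfold_locales
  have gm[measurable]: "g \<in> borel_measurable N" using g by (rule borel_measurable_integrable)
  have fm[measurable]: "f \<in> borel_measurable (measure_pmf P)" by simp
  show I: "integrable (measure_pmf P \<Otimes>\<^sub>M N) (\<lambda>x. f (fst x) * g (snd x))"
  proof (rule Fubini_integrable)
    show "(\<lambda>x. f (fst x) * g (snd x)) \<in> borel_measurable (measure_pmf P \<Otimes>\<^sub>M N)" by measurable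
    show "integrable (measure_pmf P) (\<lambda>x. \<integral>y. norm (f (fst (x, y)) * g (snd (x, y))) \<partial>N)"
      by (rule integrable_measure_pmf_finite[OF fin])
    show "AE x in measure_pmf P. integrable N (\<lambda>y. f (fst (x, y)) * g (snd (x, y)))"
      using g by simp
  qed
  have "(\<integral>x. f (fst x) * g (snd x) \<partial>(measure_pmf P \<Otimes>\<^sub>M N)) = (\<integral>\<omega>. (\<integral>y. f \<omega> * g y \<partial>N) \<partial>measure_pmf P)"
    using integral_fst'[OF I] by simp
  also have "\<dots> = (\<integral>\<omega>. f \<omega> * integral\<^sup>L N g \<partial>measure_pmf P)" by simp
  also have "\<dots> = (\<integral>\<omega>. f \<omega> \<partial>measure_pmf P) * integral\<^sup>L N g" by simp
  finally show "(\<integral>x. f (fst x) * g (snd x) \<partial>(measure_pmf P \<Otimes>\<^sub>M N)) = (\<integral>\<omega>. f \<omega> \<partial>measure_pmf P) * integral\<^sup>L N g" .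
qed

lemma a2: fixes x n a :: real assumes "x > 0" "a = x + 1" shows "(1 + n - x) / (x ^ 2 * a) = (n - x) / (x ^ 2 * a) + (1 / x ^ 2 - 1 / (x * a))"
proof -
  have "x \<noteq> 0" "a \<noteq> 0" using assms by auto
  then show ?thesis by (simp add: field_simps power2_eq_square) (simp add: assms(2) algebra_simps)
qed
lemma a4: fixes n a c::real assumes "n \<ge> 0" "a = n + 1" "c = n + 2" shows "n / a + 1 / (a * c) = a / c"
proof -
  have "a \<noteq> 0" "c \<noteq> 0" using assms by auto
  then show ?thesis by (simp add: field_simps) (simp add: assms(2,3) algebra_simps)
qed
lemma a1: fixes x n a :: real assumes "x > 0" "a = x + 1" shows "(1 + n - x) / (x * a) = (n - x) / (x * a) + 1 / (x * a)"
  by (simp add: add_divide_distrib[symmetric] algebra_simps)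
lemma a3: fixes x n H a b :: real assumes "x > 0" "n > 1" "a = x + 1" "b = n - 1" shows "(2 * (n - x) / (b * a)) * (H / x + 1 / x ^ 2) = 2 / b * (H * ((n - x) / (x * a)) + (n - x) / (x ^ 2 * a))"
proof -
  have "x \<noteq> 0" "a \<noteq> 0" "b \<noteq> 0" using assms by auto
  then show ?thesis by (simp add: field_simps power2_eq_square)
qed

lemma tele: "(\<Sum>j=1..n. 1 / (real j * (real j + 1))) = real n / (real n + 1)"
proof (induction n)
  case 0 then show ?case by simp
next
  case (Suc n)
  have "(\<Sum>j=1..Suc n. 1 / (real j * (real j + 1))) = real n / (real n + 1) + 1 / ((real n + 1) * (real n + 2))"
    using Suc by (simp add: add.commute)
  also have "\<dots> = real (Suc n) / (real (Suc n) + 1)"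
    using a4[of "real n" "real n + 1" "real n + 2"] by (simp add: ac_simps)
  finally show ?case .
qed

lemma A_id: "(\<Sum>j=1..n. (real n - real j) / (real j * (real j + 1))) = real n - Hgen n 1"
proof (induction n)
  case 0 then show ?case by (simp add: Hgen_def)
next
  case (Suc n)
  have "(\<Sum>j=1..Suc n. (real (Suc n) - real j) / (real j * (real j + 1)))
      = (\<Sum>j=1..n. (real (Suc n) - real j) / (real j * (real j + 1)))"
    by simp
  also have "\<dots> = (\<Sum>j=1..n. (real n - real j) / (real j * (real j + 1)) + 1 / (real j * (real j + 1)))"
  proof (intro sum.cong refl)
    fix j assume "j \<in> {1..n}"
    then have "real j > 0" by simp
    then show "(real (Suc n) - real j) / (real j * (real j + 1)) = (real n - real j) / (real j * (real j + 1)) + 1 / (real j * (real j + 1))"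
      using a1[of "real j" "real j + 1" "real n"] by simp
  qed
  also have "\<dots> = real n - Hgen n 1 + real n / (real n + 1)"
    using Suc tele[of n] by (simp add: sum.distrib)
  also have "\<dots> = real (Suc n) - Hgen (Suc n) 1"
    by (simp add: Hgen_def field_simps)
  finally show ?case .
qed

lemma B_id: "(\<Sum>j=1..n. (real n - real j) / (real j ^ 2 * (real j + 1))) = real n * Hgen n 2 - real n"
proof (induction n)
  case 0 then show ?case by (simp add: Hgen_def)
next
  case (Suc n)
  have "(\<Sum>j=1..Suc n. (real (Suc n) - real j) / (real j ^ 2 * (real j + 1)))
      = (\<Sum>j=1..n. (real (Suc n) - real j) / (real j ^ 2 * (real j + 1)))"
    by simp
  also have "\<dots> = (\<Sum>j=1..n. (real n - real j) / (real j ^ 2 * (real j + 1)) + (1 / real j ^ 2 - 1 / (real j * (real j + 1))))"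
  proof (intro sum.cong refl)
    fix j assume "j \<in> {1..n}"
    then have "real j > 0" by simp
    then show "(real (Suc n) - real j) / (real j ^ 2 * (real j + 1)) = (real n - real j) / (real j ^ 2 * (real j + 1)) + (1 / real j ^ 2 - 1 / (real j * (real j + 1)))"
      using a2[of "real j" "real j + 1" "real n"] by simp
  qed
  also have "\<dots> = real n * Hgen n 2 - real n + (Hgen n 2 - real n / (real n + 1))"
    using Suc tele[of n] by (simp add: sum.distrib sum_subtractf Hgen_def)
  also have "\<dots> = real (Suc n) * Hgen (Suc n) 2 - real (Suc n)"
  proof -
    have h: "1 + (real n * real n + real n * 2) \<noteq> 0"
      by (smt (verit) mult_nonneg_nonneg of_nat_0_le_iff)
    show ?thesis by (simp add: Hgen_def field_simps power2_eq_square h)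
  qed
  finally show ?case .
qed

lemma final_sum:
  assumes "n \<ge> 2"
  shows "(\<Sum>j=1..n. (2 * (real n - real j) / ((real n - 1) * (real j + 1))) * (Hgen n 1 / real j + 1 / real j ^ 2))
     = 2 * real n / (real n - 1) * (Hgen n 1 + Hgen n 2 - 1 - (Hgen n 1)\<^sup>2 / real n)"
proof -
  have n1: "real n - 1 > 0" using assms by simp
  have "(\<Sum>j=1..n. (2 * (real n - real j) / ((real n - 1) * (real j + 1))) * (Hgen n 1 / real j + 1 / real j ^ 2))
     = (\<Sum>j=1..n. 2 / (real n - 1) * (Hgen n 1 * ((real n - real j) / (real j * (real j + 1))) + (real n - real j) / (real j ^ 2 * (real j + 1))))"
  proof (intro sum.cong refl)
    fix j assume "j \<in> {1..n}"
    then have "real j > 0" by simp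
    then show "(2 * (real n - real j) / ((real n - 1) * (real j + 1))) * (Hgen n 1 / real j + 1 / real j ^ 2) = 2 / (real n - 1) * (Hgen n 1 * ((real n - real j) / (real j * (real j + 1))) + (real n - real j) / (real j ^ 2 * (real j + 1)))"
      using a3[of "real j" "real n" "real j + 1" "real n - 1" "Hgen n 1"] assms by simp
  qed
  also have "\<dots> = 2 / (real n - 1) * (Hgen n 1 * (real n - Hgen n 1) + (real n * Hgen n 2 - real n))"
    by (simp only: sum_distrib_left[symmetric] sum.distrib A_id B_id)
  also have "\<dots> = 2 * real n / (real n - 1) * (Hgen n 1 + Hgen n 2 - 1 - (Hgen n 1)\<^sup>2 / real n)"
    using n1 assms by (simp add: field_simps power2_eq_square)
  finally show ?thesis .
qed

lemma sum_split_k: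
  fixes T :: "nat \<Rightarrow> real"
  shows "(\<Sum>i=1..n. T i) - (\<Sum>i\<in>{k+1..n}. T i) = (\<Sum>j=1..n. if j \<le> k then T j else 0)"
proof -
  have "(\<Sum>i=1..n. T i) = (\<Sum>j=1..n. (if j \<le> k then T j else 0) + (if k < j then T j else 0))"
    by (intro sum.cong) auto
  also have "\<dots> = (\<Sum>j=1..n. if j \<le> k then T j else 0) + (\<Sum>j=1..n. if k < j then T j else 0)"
    by (simp add: sum.distrib)
  also have "(\<Sum>j=1..n. if k < j then T j else 0) = (\<Sum>j\<in>{x\<in>{1..n}. k < x}. T j)"
    by (rule sum.inter_filter[symmetric]) simp
  also have "{x\<in>{1..n}. k < x} = {k+1..n}" by auto
  finally show ?thesis by simp
qed

lemma int_dsum: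
  fixes g :: "'i \<Rightarrow> 'j \<Rightarrow> 'a \<Rightarrow> real"
  assumes "\<And>i j. i \<in> I \<Longrightarrow> j \<in> J \<Longrightarrow> integrable M (g i j)"
  shows "(\<integral>x. (\<Sum>i\<in>I. \<Sum>j\<in>J. g i j x) \<partial>M) = (\<Sum>i\<in>I. \<Sum>j\<in>J. integral\<^sup>L M (g i j))"
proof -
  have "(\<integral>x. (\<Sum>i\<in>I. \<Sum>j\<in>J. g i j x) \<partial>M) = (\<Sum>i\<in>I. \<integral>x. (\<Sum>j\<in>J. g i j x) \<partial>M)"
    by (rule Bochner_Integration.integral_sum) (rule Bochner_Integration.integrable_sum, rule assms)
  also have "\<dots> = (\<Sum>i\<in>I. \<Sum>j\<in>J. integral\<^sup>L M (g i j))"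
    by (intro sum.cong refl Bochner_Integration.integral_sum assms)
  finally show ?thesis .
qed

lemma aux_pj:
  fixes F nn J b d :: real
  assumes "F \<noteq> 0" "nn \<noteq> 0" "J \<noteq> 0" "b \<noteq> 0"
  shows "((2 * (nn * F) * d / J) / 2) / (F * (nn * b / 2)) = 2 * d / (b * J)"
  using assms by (simp add: field_simps)

theorem lemmaY4p3:
  fixes n :: nat
  assumes "n \<ge> 2"
  shows "(\<integral>x. tree_height n (snd x) * (tree_height n (snd x) - coal_time n x) \<partial>yule_space n)
         = 2 * real n / (real n - 1) *
           (Hgen n 1 + Hgen n 2 - 1 - (Hgen n 1)\<^sup>2 / real n)"
proof -
  obtain m where n: "n = Suc m" using assms by (cases n) auto
  have m1: "m \<ge> 1" using assms n by simp
  define TP where "TP = tip_pairs n"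
  define P where "P = pair_pmf (pmf_of_set (chs m)) (pmf_of_set TP)"
  define N where "N = PiM {1..n} Mi"
  have yc: "yule_choices n = chs m" by (simp add: n yule_choices_def chs_def)
  have ys: "yule_space n = measure_pmf P \<Otimes>\<^sub>M N"
    unfolding yule_space_def P_def N_def Mi_def yule_topology_def yc TP_def by simp
  have Nprob: "prob_space N" unfolding N_def by (rule prob_space_PiM) (use Mi_prob in auto)
  have chs_ne: "chs m \<noteq> {}" using chs_card[of m] chs_finite[of m] by auto
  have "(0, 1) \<in> TP" using assms by (simp add: TP_def tip_pairs_def)
  then have TP_ne: "TP \<noteq> {}" by blast
  have TP_fin: "finite TP" unfolding TP_def by (rule tip_pairs_finite)
  have setP: "set_pmf P = chs m \<times> TP"
    unfolding P_def using chs_ne TP_ne TP_fin chs_finite by simp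
  have finP: "finite (set_pmf P)" unfolding setP using TP_fin chs_finite by simp
  define ind where "ind j \<omega> = (if j \<le> kappa n \<omega> then 1 else (0::real))" for j \<omega>
  have kap: "kappa n (cs, p) = split_event cs m (fst p) (snd p)" for cs p by (simp add: kappa_def n)
  have pw: "tree_height n (snd x) * (tree_height n (snd x) - coal_time n x)
      = (\<Sum>i\<in>{1..n}. \<Sum>j\<in>{1..n}. ind j (fst x) * (snd x i * snd x j))" for x
  proof -
    have d: "tree_height n (snd x) - coal_time n x = (\<Sum>j=1..n. if j \<le> kappa n (fst x) then snd x j else 0)"
      unfolding tree_height_def coal_time_def by (rule sum_split_k)
    show ?thesis
      unfolding d unfolding tree_height_def sum_product ind_def by (intro sum.cong refl) auto
  qed
  have Nm: "has_bochner_integral N (\<lambda>T. T i * T j) ((if i = j then 2 else 1) / (real i * real j))"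
    if "i \<in> {1..n}" "j \<in> {1..n}" for i j
    unfolding N_def by (rule N_mom[OF that])
  have integ: "integrable (measure_pmf P \<Otimes>\<^sub>M N) (\<lambda>x. ind j (fst x) * (snd x i * snd x j))"
    if "i \<in> {1..n}" "j \<in> {1..n}" for i j
    using prod_int(1)[OF finP Nprob, of "\<lambda>T. T i * T j" "ind j"] Nm[OF that] by (simp add: has_bochner_integral_iff)
  have tmi: "(\<integral>x. ind j (fst x) * (snd x i * snd x j) \<partial>(measure_pmf P \<Otimes>\<^sub>M N))
      = (\<integral>\<omega>. ind j \<omega> \<partial>measure_pmf P) * ((if i = j then 2 else 1) / (real i * real j))"
    if "i \<in> {1..n}" "j \<in> {1..n}" for i j
    using prod_int(2)[OF finP Nprob, of "\<lambda>T. T i * T j" "ind j"] Nm[OF that] by (simp add: has_bochner_integral_iff)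
  have pj: "(\<integral>\<omega>. ind j \<omega> \<partial>measure_pmf P) = 2 * (real n - real j) / ((real n - 1) * (real j + 1))"
    if j: "j \<in> {1..n}" for j
  proof -
    have "(\<integral>\<omega>. ind j \<omega> \<partial>measure_pmf P) = (\<Sum>a\<in>chs m \<times> TP. ind j a * pmf P a)"
      by (rule integral_measure_pmf_real) (use TP_fin chs_finite setP in auto)
    also have "\<dots> = (\<Sum>a\<in>chs m \<times> TP. ind j a) / (real (card (chs m)) * real (card TP))"
      unfolding sum_divide_distrib
      by (intro sum.cong refl) (use TP_fin chs_finite chs_ne TP_ne in \<open>auto simp: P_def pmf_pair pmf_of_set[OF chs_ne chs_finite] pmf_of_set[OF TP_ne TP_fin]\<close>)
    also have "(\<Sum>a\<in>chs m \<times> TP. ind j a) = real (Tot m j) / 2"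
    proof -
      have "(\<Sum>a\<in>chs m \<times> TP. ind j a) = (\<Sum>cs\<in>chs m. \<Sum>p\<in>TP. ind j (cs, p))"
        by (simp add: sum.cartesian_product)
      also have "\<dots> = (\<Sum>cs\<in>chs m. real (Ord m cs j) / 2)"
      proof (intro sum.cong refl)
        fix cs
        have "real (Ord m cs j) = real (2 * (\<Sum>p\<in>tip_pairs (Suc m). if j \<le> split_event cs m (fst p) (snd p) then 1 else 0))"
          by (simp only: Ord_pairs)
        also have "\<dots> = 2 * real (\<Sum>p\<in>tip_pairs (Suc m). if j \<le> split_event cs m (fst p) (snd p) then 1 else 0)"
          by (simp only: of_nat_mult of_nat_numeral)
        also have "real (\<Sum>p\<in>tip_pairs (Suc m). if j \<le> split_event cs m (fst p) (snd p) then 1 else 0) = (\<Sum>p\<in>TP. ind j (cs, p))"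
          unfolding TP_def n of_nat_sum by (intro sum.cong refl) (simp add: ind_def kap)
        finally show "(\<Sum>p\<in>TP. ind j (cs, p)) = real (Ord m cs j) / 2" by simp
      qed
      also have "\<dots> = real (Tot m j) / 2"
        by (simp add: Tot_def of_nat_sum sum_divide_distrib)
      finally show ?thesis .
    qed
    finally have eq: "(\<integral>\<omega>. ind j \<omega> \<partial>measure_pmf P) = (real (Tot m j) / 2) / (real (fact m) * real (card TP))"
      by (simp add: chs_card)
    have jn: "1 \<le> j" "j \<le> Suc m" using j n by auto
    have T0: "real ((j + 1) * Tot m j) = real (2 * fact (Suc m) * (Suc m - j))"
      by (simp only: Tot_formula[OF jn])
    have fS: "real (fact (Suc m)) = real n * real (fact m)" by (simp add: n algebra_simps)
    have dS: "real (Suc m - j) = real n - real j" using jn n by (simp add: of_nat_diff)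
    have T1: "(real j + 1) * real (Tot m j) = 2 * (real n * real (fact m)) * (real n - real j)"
      using T0 unfolding of_nat_mult of_nat_numeral fS dS by (simp add: add.commute)
    have jp: "real j + 1 \<noteq> 0" by simp
    have T2: "real (Tot m j) = 2 * (real n * real (fact m)) * (real n - real j) / (real j + 1)"
      using T1 jp by (simp add: eq_divide_eq mult.commute)
    have C0: "real (2 * card TP) = real (n * (n - 1))" unfolding TP_def by (simp only: tip_pairs_card)
    have C1: "2 * real (card TP) = real n * (real n - 1)"
      using C0 assms unfolding of_nat_mult by (simp add: of_nat_diff)
    have C: "real (card TP) = real n * (real n - 1) / 2"
      using C1 by simp
    have F: "real (fact m) > 0" by simp
    have nz: "real n \<noteq> 0" "real j + 1 \<noteq> 0" "real n - 1 \<noteq> 0" "real (fact m) \<noteq> 0" using assms by auto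
    show ?thesis unfolding eq T2 C using aux_pj[OF nz(4,1,2,3), of "real n - real j"] by (simp add: mult.commute)
  qed
  have ci: "(\<Sum>i\<in>{1..n}. (if i = j then 2 else 1) / (real i * real j)) = Hgen n 1 / real j + 1 / real j ^ 2"
    if j: "j \<in> {1..n}" for j
  proof -
    have "(\<Sum>i\<in>{1..n}. (if i = j then 2 else 1) / (real i * real j))
        = (\<Sum>i\<in>{1..n}. (1 / real i) / real j + (if i = j then 1 / (real i * real j) else 0))"
      by (intro sum.cong refl) auto
    also have "\<dots> = (\<Sum>i\<in>{1..n}. 1 / real i) / real j + (\<Sum>i\<in>{1..n}. (if i = j then 1 / (real i * real j) else 0))"
      by (simp only: sum.distrib sum_divide_distrib)
    also have "\<dots> = Hgen n 1 / real j + 1 / real j ^ 2"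
      using j by (simp add: Hgen_def power2_eq_square)
    finally show ?thesis .
  qed
  have "(\<integral>x. tree_height n (snd x) * (tree_height n (snd x) - coal_time n x) \<partial>yule_space n)
      = (\<integral>x. (\<Sum>i\<in>{1..n}. \<Sum>j\<in>{1..n}. ind j (fst x) * (snd x i * snd x j)) \<partial>(measure_pmf P \<Otimes>\<^sub>M N))"
    unfolding ys pw ..
  also have "\<dots> = (\<Sum>i\<in>{1..n}. \<Sum>j\<in>{1..n}. (\<integral>x. ind j (fst x) * (snd x i * snd x j) \<partial>(measure_pmf P \<Otimes>\<^sub>M N)))"
    by (rule int_dsum) (rule integ)
  also have "\<dots> = (\<Sum>i\<in>{1..n}. \<Sum>j\<in>{1..n}. (2 * (real n - real j) / ((real n - 1) * (real j + 1))) * ((if i = j then 2 else 1) / (real i * real j)))"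
    by (intro sum.cong refl) (simp add: tmi pj)
  also have "\<dots> = (\<Sum>j\<in>{1..n}. (2 * (real n - real j) / ((real n - 1) * (real j + 1))) * (\<Sum>i\<in>{1..n}. (if i = j then 2 else 1) / (real i * real j)))"
    by (subst sum.swap) (simp add: sum_distrib_left)
  also have "\<dots> = (\<Sum>j=1..n. (2 * (real n - real j) / ((real n - 1) * (real j + 1))) * (Hgen n 1 / real j + 1 / real j ^ 2))"
  proof (intro sum.cong refl)
    fix j assume "j \<in> {1..n}"
    then show "2 * (real n - real j) / ((real n - 1) * (real j + 1)) * (\<Sum>i\<in>{1..n}. (if i = j then 2 else 1) / (real i * real j))
        = 2 * (real n - real j) / ((real n - 1) * (real j + 1)) * (Hgen n 1 / real j + 1 / real j ^ 2)"
      using ci by simp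
  qed
  also have "\<dots> = 2 * real n / (real n - 1) * (Hgen n 1 + Hgen n 2 - 1 - (Hgen n 1)\<^sup>2 / real n)"
    by (rule final_sum[OF assms])
  finally show ?thesis .
qed

end
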